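(* Let $N\ge2$, $\rho\in(0,1)\setminus\{\tfrac12\}$, $f<0$, $g<0$, and $\nu=i\omega$ with $\omega\in\mathbb{R}\setminus\{0\}$. Then for every $k\in\{1,\dots,N\}$, whenever the denominator below is nonzero, $$a_k(\nu)=\kappa^k\,\frac{(\mu_+-\mu_+^{-1})\mu_+^{N-k}-(\mu_--\mu_-^{-1})\mu_-^{N-k}}{(\mu_+-\mu_+^{-1})\mu_+^{N}-(\mu_--\mu_-^{-1})\mu_-^{N}},$$ where $\mu_\pm=\mu_\pm(\nu)$.
   Context: Model and $a_k$: agents $0,\dots,N$ with deviations $z_k$, leader $z_0$ prescribed; for $1\le i\le N-1$, $\ddot z_i=f\{z_i-(1-\rho)z_{i-1}-\rho z_{i+1}\}+g\{\dot z_i-(1-\rho)\dot z_{i-1}-\rho\dot z_{i+1}\}$; $\ddot z_N=f\{z_N-z_{N-1}\}+g\{\dot z_N-\dot z_{N-1}\}$. Written as $\dot z=Mz+\Gamma_0(t)$ with $z=(z_1,\dot z_1,\dots,z_N,\dot z_N)^T$, $M=I_N\otimes A+P\otimes K$, $A=\begin{pmatrix}0&1\\0&0\end{pmatrix}$, $K=\begin{pmatrix}0&0\\ f&g\end{pmatrix}$, $P=I_N-Q_\rho$ ($Q_\rho$: zero diagonal, $(Q_\rho)_{i,i+1}=\rho$ for $1\le i\le N-1$, $(Q_\rho)_{i,i-1}=1-\rho$ for $2\le i\le N-1$, $(Q_\rho)_{N,N-1}=1$, else $0$). For $\nu\in i\mathbb{R}$ not an eigenvalue of $M$, $a(\nu)=-(M-\nu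 I)^{-1}g_0(\nu)$ with $g_0(\nu)=-(1-\rho)(f+g\nu)e_2$, and $a_k(\nu)$ is the $(2k-1)$-th entry of $a(\nu)$ (the steady-state amplitude of $z_k$ when $z_0(t)=e^{\nu t}$). Notation: $\kappa=\frac{1-\rho}{\rho}$; $\gamma(\nu)=\frac{f+g\nu-\nu^2}{f+g\nu}$; $\mu_\pm(\nu)=\frac{1}{2\rho}\left(\gamma\pm\sqrt{\gamma^2-4\rho(1-\rho)}\right)$, the two roots of $\rho\mu^2-\gamma\mu+(1-\rho)=0$. Branch convention: for $w\neq0$, $\sqrt w$ is the square root of $w$ whose argument lies in $[0,\pi)$ (branch cut along the positive real axis). *)

theory Defs
  imports "Jordan_Normal_Form.Char_Poly" "Jordan_Normal_Form.Gauss_Jordan_Elimination"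
begin

(* Agent k (1 <= k <= N) corresponds to
   row/column index k-1 of the N x N matrices, and to positions 2(k-1) (z_k)
   and 2(k-1)+1 (dz_k) of the 2N-dimensional state vector. *)

definition A_mat :: "complex mat" where
  "A_mat = mat_of_rows_list 2 [[0, 1], [0, 0]]"

definition K_mat :: "real \<Rightarrow> real \<Rightarrow> complex mat" where
  "K_mat f g = mat_of_rows_list 2 [[0, 0], [complex_of_real f, complex_of_real g]]"

(* Q_rho, 0-based: (Q)_{i,i+1} = rho for agent i+1 <= N-1, (Q)_{i,i-1} = 1-rho for
   2 <= agent i+1 <= N-1, (Q)_{N,N-1} = 1 (1-based), else 0 *)
definition Q_mat :: "nat \<Rightarrow> real \<Rightarrow> complex mat" where
  "Q_mat N \<rho> = mat N N (\<lambda>(i, j).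
      if i + 1 \<le> N - 1 \<and> j = i + 1 then complex_of_real \<rho>
      else if 2 \<le> i + 1 \<and> i + 1 \<le> N - 1 \<and> j + 1 = i then complex_of_real (1 - \<rho>)
      else if i + 1 = N \<and> j + 2 = N then 1
      else 0)"

definition P_mat :: "nat \<Rightarrow> real \<Rightarrow> complex mat" where
  "P_mat N \<rho> = 1\<^sub>m N - Q_mat N \<rho>"

definition kron2 :: "complex mat \<Rightarrow> complex mat \<Rightarrow> complex mat" where
  "kron2 X Y = mat (2 * dim_row X) (2 * dim_col X)
      (\<lambda>(i, j). X $$ (i div 2, j div 2) * Y $$ (i mod 2, j mod 2))"

definition M_mat :: "nat \<Rightarrow> real \<Rightarrow> real \<Rightarrow> real \<Rightarrow> complex mat" where
  "M_mat N \<rho> f g = kron2 (1\<^sub>m N) A_mat + kron2 (P_mat N \<rho>) (K_mat f g)"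

definition g0_vec :: "nat \<Rightarrow> real \<Rightarrow> real \<Rightarrow> real \<Rightarrow> complex \<Rightarrow> complex vec" where
  "g0_vec N \<rho> f g \<nu> = (- (complex_of_real (1 - \<rho>) * (complex_of_real f + complex_of_real g * \<nu>)))
      \<cdot>\<^sub>v unit_vec (2 * N) 1"

definition a_vec :: "nat \<Rightarrow> real \<Rightarrow> real \<Rightarrow> real \<Rightarrow> complex \<Rightarrow> complex vec" where
  "a_vec N \<rho> f g \<nu> =
     - (the (mat_inverse (M_mat N \<rho> f g - \<nu> \<cdot>\<^sub>m 1\<^sub>m (2 * N))) *\<^sub>v g0_vec N \<rho> f g \<nu>)"

(* a_k(nu): the (2k-1)-th entry (1-based), i.e. index 2k-2 (0-based) *)
definition a_k :: "nat \<Rightarrow> real \<Rightarrow> real \<Rightarrow> real \<Rightarrow> complex \<Rightarrow> nat \<Rightarrow> complex" where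
  "a_k N \<rho> f g \<nu> k = a_vec N \<rho> f g \<nu> $ (2 * k - 2)"

definition kappa :: "real \<Rightarrow> real" where
  "kappa \<rho> = (1 - \<rho>) / \<rho>"

definition gamma_fn :: "real \<Rightarrow> real \<Rightarrow> complex \<Rightarrow> complex" where
  "gamma_fn f g \<nu> = (complex_of_real f + complex_of_real g * \<nu> - \<nu>\<^sup>2)
                      / (complex_of_real f + complex_of_real g * \<nu>)"

definition sqrt_br :: "complex \<Rightarrow> complex" where
  "sqrt_br w = (if w = 0 then 0 else (THE s. s\<^sup>2 = w \<and> 0 \<le> Arg s \<and> Arg s < pi))"

definition mu_plus :: "real \<Rightarrow> real \<Rightarrow> real \<Rightarrow> complex \<Rightarrow> complex" where
  "mu_plus \<rho> f g \<nu> = (gamma_fn f g \<nu> + sqrt_br ((gamma_fn f g \<nu>)\<^sup>2 - 4 * complex_of_real (\<rho> * (1 - \<rho>))))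
                        / (2 * complex_of_real \<rho>)"

definition mu_minus :: "real \<Rightarrow> real \<Rightarrow> real \<Rightarrow> complex \<Rightarrow> complex" where
  "mu_minus \<rho> f g \<nu> = (gamma_fn f g \<nu> - sqrt_br ((gamma_fn f g \<nu>)\<^sup>2 - 4 * complex_of_real (\<rho> * (1 - \<rho>))))
                        / (2 * complex_of_real \<rho>)"

end

theory Submission imports Defs begin
lemma Im_pos_Arg: assumes "0 < Im s" shows "0 < Arg s \<and> Arg s < pi"
proof -
  have s0: "s \<noteq> 0" using assms by auto
  have sa: "sin (Arg s) = Im s / cmod s" using sin_Arg[OF s0] .
  then have "0 < sin (Arg s)" using assms s0 by auto
  moreover have "- pi < Arg s \<and> Arg s \<le> pi" by (rule Arg_bounded)
  moreover have "sin x \<le> 0" if "- pi \<le> x" "x \<le> 0" for x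
    using sin_ge_zero[of "-x"] that by auto
  ultimately show ?thesis by (metis less_eq_real_def not_less sin_pi)
qed

lemma sqrt_br_sq: "(sqrt_br w)^2 = w"
proof (cases "w = 0")
  case True then show ?thesis by (simp add: sqrt_br_def)
next
  case False
  let ?P = "\<lambda>s. s\<^sup>2 = w \<and> 0 \<le> Arg s \<and> Arg s < pi"
  have good: "?P s" if "s\<^sup>2 = w" "0 < Im s \<or> (Im s = 0 \<and> 0 < Re s)" for s
  proof -
    from that(2) show ?thesis
    proof
      assume "0 < Im s" then show ?thesis using Im_pos_Arg[of s] that(1) by auto
    next
      assume h: "Im s = 0 \<and> 0 < Re s"
      then have "sgn s = cis 0"
        by (simp add: sgn_eq complex_eq_iff cmod_eq_Re)
      then have "Arg s = 0" by (intro cis_Arg_unique) auto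
      then show ?thesis using that(1) by simp
    qed
  qed
  have char: "0 < Im s \<or> (Im s = 0 \<and> 0 < Re s)" if "?P s" for s
  proof -
    have s0: "s \<noteq> 0" using that False by auto
    have n: "0 < cmod s" using s0 by auto
    have si: "Im s = sin (Arg s) * cmod s" using sin_Arg[OF s0] n by auto
    have co: "Re s = cos (Arg s) * cmod s" using cos_Arg[OF s0] n by auto
    show ?thesis
    proof (cases "Arg s = 0")
      case True
      then show ?thesis using si co n by auto
    next
      case False
      then have "0 < Arg s" using that by auto
      then have "0 < sin (Arg s)" using sin_gt_zero that by auto
      then show ?thesis using si n by auto
    qed
  qed
  obtain c where csq: "c\<^sup>2 = w" by (meson power2_csqrt)
  have c0: "c \<noteq> 0" using False csq by auto
  obtain s where s: "?P s"
  proof (cases "0 < Im c \<or> (Im c = 0 \<and> 0 < Re c)")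
    case True
    have "?P c" by (rule good) (use True csq in simp_all)
    then show ?thesis by (rule that)
  next
    case F: False
    have "0 < Im (-c) \<or> (Im (-c) = 0 \<and> 0 < Re (-c))"
      using F c0 by (simp add: complex_eq_iff) linarith
    then have "?P (-c)" by (intro good) (use csq in simp_all)
    then show ?thesis by (rule that)
  qed
  have uniq: "t = s" if "?P t" for t
  proof -
    have "(t - s) * (t + s) = 0" using that s by (simp add: algebra_simps power2_eq_square)
    then have "t = s \<or> t = -s" by (auto simp: add_eq_0_iff2)
    moreover have "\<not> ?P (-s)"
    proof
      assume "?P (-s)"
      from char[OF this] char[OF s] show False by auto
    qed
    ultimately show ?thesis using that by auto
  qed
  have "?P (THE s. ?P s)" by (rule theI[of ?P s, OF s uniq])
  then show ?thesis unfolding sqrt_br_def using False by (simp only: if_False)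
qed
lemma A_entry: "i < 2 \<Longrightarrow> j < 2 \<Longrightarrow> A_mat $$ (i,j) = (if i = 0 \<and> j = 1 then 1 else 0)"
  unfolding A_mat_def by (auto simp: mat_of_rows_list_def less_2_cases_iff)

lemma K_entry: "i < 2 \<Longrightarrow> j < 2 \<Longrightarrow> K_mat f g $$ (i,j) =
   (if i = 1 then (if j = 0 then complex_of_real f else complex_of_real g) else 0)"
  unfolding K_mat_def by (auto simp: mat_of_rows_list_def less_2_cases_iff)

lemma dims: "dim_row (P_mat N \<rho>) = N" "dim_col (P_mat N \<rho>) = N"
  "dim_row (M_mat N \<rho> f g) = 2*N" "dim_col (M_mat N \<rho> f g) = 2*N"
  by (auto simp: P_mat_def Q_mat_def M_mat_def kron2_def)

lemma P_entry: "i < N \<Longrightarrow> j < N \<Longrightarrow> P_mat N \<rho> $$ (i,j) = (if i = j then 1 else 0) - Q_mat N \<rho> $$ (i,j)"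
  by (simp add: P_mat_def Q_mat_def)

lemma M_entry: "i < 2*N \<Longrightarrow> j < 2*N \<Longrightarrow> M_mat N \<rho> f g $$ (i,j) =
   (if i div 2 = j div 2 then A_mat $$ (i mod 2, j mod 2) else 0)
   + P_mat N \<rho> $$ (i div 2, j div 2) * K_mat f g $$ (i mod 2, j mod 2)"
  by (simp add: M_mat_def kron2_def dims)

lemma sum_pairs: fixes h :: "nat \<Rightarrow> 'a::comm_monoid_add" shows "(\<Sum>l<2*N. h l) = (\<Sum>m<N. h (2*m) + h (2*m+1))"
  by (induction N) (auto simp: sum.distrib add_ac)


lemma Q_sum: assumes "j < N" "2 \<le> N"
  shows "(\<Sum>m<N. Q_mat N \<rho> $$ (j,m) * y m) =
    (if j + 2 \<le> N then complex_of_real \<rho> * y (j+1) else 0)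
  + (if 1 \<le> j \<and> j + 2 \<le> N then complex_of_real (1-\<rho>) * y (j-1) else 0)
  + (if j + 1 = N then y (N-2) else 0)"
proof -
  have "(\<Sum>m<N. Q_mat N \<rho> $$ (j,m) * y m) = (\<Sum>m<N.
      (if m = j+1 then (if j + 2 \<le> N then complex_of_real \<rho> * y (j+1) else 0) else 0)
    + (if m = j-1 then (if 1 \<le> j \<and> j + 2 \<le> N then complex_of_real (1-\<rho>) * y (j-1) else 0) else 0)
    + (if m = N-2 then (if j + 1 = N then y (N-2) else 0) else 0))"
  proof (intro sum.cong refl)
    fix m assume "m \<in> {..<N}"
    then have m: "m < N" by simp
    have Qe: "Q_mat N \<rho> $$ (j,m) = (if j + 1 \<le> N - 1 \<and> m = j + 1 then complex_of_real \<rho>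
      else if 2 \<le> j + 1 \<and> j + 1 \<le> N - 1 \<and> m + 1 = j then complex_of_real (1 - \<rho>)
      else if j + 1 = N \<and> m + 2 = N then 1 else 0)"
      using m assms by (simp add: Q_mat_def)
    show "Q_mat N \<rho> $$ (j,m) * y m = 
      (if m = j+1 then (if j + 2 \<le> N then complex_of_real \<rho> * y (j+1) else 0) else 0)
    + (if m = j-1 then (if 1 \<le> j \<and> j + 2 \<le> N then complex_of_real (1-\<rho>) * y (j-1) else 0) else 0)
    + (if m = N-2 then (if j + 1 = N then y (N-2) else 0) else 0)"
    proof (cases "j + 1 = N")
      case True
      then have e: "(m + 2 = N) = (m = N - 2)" using assms by linarith
      have f1: "\<not> (j + 1 \<le> N - 1 \<and> m = j + 1)" "\<not> (2 \<le> j + 1 \<and> j + 1 \<le> N - 1 \<and> m + 1 = j)"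
        "m \<noteq> j + 1" "\<not> (j + 2 \<le> N)" "\<not> (1 \<le> j \<and> j + 2 \<le> N)"
        using True m by linarith+
      show ?thesis unfolding Qe if_not_P[OF f1(1)] if_not_P[OF f1(2)] if_not_P[OF f1(3)] if_not_P[OF f1(4)]
        if_not_P[OF f1(5)] e using True by simp
    next
      case False
      then have j2: "j + 2 \<le> N" "j + 1 \<le> N - 1" using assms by linarith+
      have e: "(2 \<le> j + 1 \<and> m + 1 = j) = (1 \<le> j \<and> m = j - 1)" by linarith
      have ne: "m = j + 1 \<Longrightarrow> m \<noteq> j - 1" by linarith
      have ne2: "m \<noteq> N - 2 \<or> \<not> (j + 1 = N)" using False by simp
      show ?thesis unfolding Qe using False j2 e ne by (auto simp del: One_nat_def)
    qed
  qed
  also have "\<dots> = (if j + 1 < N then (if j + 2 \<le> N then complex_of_real \<rho> * y (j+1) else 0) else 0)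
    + (if j - 1 < N then (if 1 \<le> j \<and> j + 2 \<le> N then complex_of_real (1-\<rho>) * y (j-1) else 0) else 0)
    + (if N - 2 < N then (if j + 1 = N then y (N-2) else 0) else 0)"
    by (simp only: sum.distrib sum.delta finite_lessThan lessThan_iff)
  finally have S: "(\<Sum>m<N. Q_mat N \<rho> $$ (j,m) * y m) = (if j + 1 < N then (if j + 2 \<le> N then complex_of_real \<rho> * y (j+1) else 0) else 0)
    + (if j - 1 < N then (if 1 \<le> j \<and> j + 2 \<le> N then complex_of_real (1-\<rho>) * y (j-1) else 0) else 0)
    + (if N - 2 < N then (if j + 1 = N then y (N-2) else 0) else 0)" .
  have e: "(j + 1 < N) = (j + 2 \<le> N)" "j - 1 < N" "N - 2 < N" using assms by linarith+
  show ?thesis unfolding S e using e by simp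
qed

lemma key_matrix:
  fixes b :: "nat \<Rightarrow> complex" and \<nu> :: complex and f g \<rho> :: real and N :: nat
  defines "\<phi> \<equiv> complex_of_real f + complex_of_real g * \<nu>"
  assumes N: "2 \<le> N"
  and R0: "\<phi> * (b 1 - complex_of_real \<rho> * b 2) - \<nu>\<^sup>2 * b 1 = complex_of_real (1-\<rho>) * \<phi>"
  and Rmid: "\<And>j. 1 \<le> j \<Longrightarrow> j + 2 \<le> N \<Longrightarrow>
      \<phi> * (b (j+1) - complex_of_real \<rho> * b (j+2) - complex_of_real (1-\<rho>) * b j) - \<nu>\<^sup>2 * b (j+1) = 0"
  and Rlast: "\<phi> * (b N - b (N-1)) - \<nu>\<^sup>2 * b N = 0"
  shows "(M_mat N \<rho> f g - \<nu> \<cdot>\<^sub>m 1\<^sub>m (2*N)) *\<^sub>v vec (2*N) (\<lambda>i. if even i then b (i div 2 + 1) else \<nu> * b (i div 2 + 1))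
     = - g0_vec N \<rho> f g \<nu>"
    (is "?B *\<^sub>v ?c = _")
proof (rule eq_vecI)
  have dB: "dim_row ?B = 2*N" "dim_col ?B = 2*N" by (simp_all add: dims)
  show "dim_vec (?B *\<^sub>v ?c) = dim_vec (- g0_vec N \<rho> f g \<nu>)" by (simp add: dB g0_vec_def)
  fix i assume "i < dim_vec (- g0_vec N \<rho> f g \<nu>)"
  then have i: "i < 2*N" by (simp add: g0_vec_def)
  have Bent: "?B $$ (i,l) = M_mat N \<rho> f g $$ (i,l) - (if i = l then \<nu> else 0)" if "l < 2*N" for l
    using i that by (simp add: dims)
  have "(?B *\<^sub>v ?c) $ i = (\<Sum>l<2*N. ?B $$ (i,l) * ?c $ l)"
    using i dB by (simp add: scalar_prod_def lessThan_atLeast0)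
  also have "\<dots> = (\<Sum>m<N. ?B $$ (i,2*m) * b (m+1) + ?B $$ (i,2*m+1) * (\<nu> * b (m+1)))"
    unfolding sum_pairs by (intro sum.cong refl) simp
  also have "\<dots> = (\<Sum>m<N. (M_mat N \<rho> f g $$ (i,2*m) - (if i = 2*m then \<nu> else 0)) * b (m+1)
        + (M_mat N \<rho> f g $$ (i,2*m+1) - (if i = 2*m+1 then \<nu> else 0)) * (\<nu> * b (m+1)))"
    by (intro sum.cong refl) (simp add: Bent)
  finally have S: "(?B *\<^sub>v ?c) $ i = (\<Sum>m<N. (M_mat N \<rho> f g $$ (i,2*m) - (if i = 2*m then \<nu> else 0)) * b (m+1)
        + (M_mat N \<rho> f g $$ (i,2*m+1) - (if i = 2*m+1 then \<nu> else 0)) * (\<nu> * b (m+1)))" .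
  obtain j where ij: "i = 2*j \<or> i = 2*j+1" and j: "j < N"
    using i by (metis div_mult_mod_eq mult.commute mod2_eq_if add.right_neutral
        less_mult_imp_div_less)
  have R: "(- g0_vec N \<rho> f g \<nu>) $ i = (if i = 1 then complex_of_real (1-\<rho>) * \<phi> else 0)"
    using i N by (simp add: g0_vec_def \<phi>_def)
  have Me: "M_mat N \<rho> f g $$ (2*j, 2*m) = 0" "M_mat N \<rho> f g $$ (2*j, 2*m+1) = (if j = m then 1 else 0)"
    "M_mat N \<rho> f g $$ (2*j+1, 2*m) = P_mat N \<rho> $$ (j,m) * complex_of_real f"
    "M_mat N \<rho> f g $$ (2*j+1, 2*m+1) = P_mat N \<rho> $$ (j,m) * complex_of_real g"
    if "m < N" for m
    using that j by (simp_all add: M_entry A_entry K_entry)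
  show "(?B *\<^sub>v ?c) $ i = (- g0_vec N \<rho> f g \<nu>) $ i"
  proof (cases "i = 2*j")
    case True
    have "(?B *\<^sub>v ?c) $ i = (\<Sum>m<N. 0)" unfolding S
    proof (intro sum.cong refl)
      fix m assume "m \<in> {..<N}"
      then have m: "m < N" by simp
      show "(M_mat N \<rho> f g $$ (i,2*m) - (if i = 2*m then \<nu> else 0)) * b (m+1)
        + (M_mat N \<rho> f g $$ (i,2*m+1) - (if i = 2*m+1 then \<nu> else 0)) * (\<nu> * b (m+1)) = 0"
        unfolding True Me[OF m] by (cases "j = m") auto
    qed
    then show ?thesis unfolding R using True by simp
  next
    case False
    then have i1: "i = 2*j+1" using ij by simp
    have "(?B *\<^sub>v ?c) $ i = (\<Sum>m<N. \<phi> * (P_mat N \<rho> $$ (j,m) * b (m+1)) - (if j = m then \<nu>\<^sup>2 * b (m+1) else 0))"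
      unfolding S
    proof (intro sum.cong refl)
      fix m assume "m \<in> {..<N}"
      then have m: "m < N" by simp
      show "(M_mat N \<rho> f g $$ (i,2*m) - (if i = 2*m then \<nu> else 0)) * b (m+1)
        + (M_mat N \<rho> f g $$ (i,2*m+1) - (if i = 2*m+1 then \<nu> else 0)) * (\<nu> * b (m+1)) =
        \<phi> * (P_mat N \<rho> $$ (j,m) * b (m+1)) - (if j = m then \<nu>\<^sup>2 * b (m+1) else 0)"
        unfolding i1 Me[OF m] \<phi>_def by (cases "j = m") (auto simp: algebra_simps power2_eq_square)
    qed
    also have "\<dots> = \<phi> * (\<Sum>m<N. P_mat N \<rho> $$ (j,m) * b (m+1)) - \<nu>\<^sup>2 * b (j+1)"
      using j by (simp add: sum_subtractf sum_distrib_left)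
    also have "(\<Sum>m<N. P_mat N \<rho> $$ (j,m) * b (m+1)) = b (j+1) - (\<Sum>m<N. Q_mat N \<rho> $$ (j,m) * b (m+1))"
    proof -
      have d: "(\<Sum>m<N. (if j = m then 1 else 0) * b (m+1)) = b (j+1)"
      proof -
        have "(\<Sum>m<N. (if j = m then 1 else 0) * b (m+1)) = (\<Sum>m<N. if j = m then b (m+1) else 0)"
          by (intro sum.cong refl) simp
        also have "\<dots> = b (j+1)" using j by (subst sum.delta') auto
        finally show ?thesis .
      qed
      have "(\<Sum>m<N. P_mat N \<rho> $$ (j,m) * b (m+1)) = (\<Sum>m<N. (if j = m then 1 else 0) * b (m+1) - Q_mat N \<rho> $$ (j,m) * b (m+1))"
        by (intro sum.cong refl) (simp add: P_entry j left_diff_distrib)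
      then show ?thesis by (simp only: sum_subtractf d)
    qed
    also have "(\<Sum>m<N. Q_mat N \<rho> $$ (j,m) * b (m+1)) = 
      (if j + 2 \<le> N then complex_of_real \<rho> * b (j+1+1) else 0)
      + (if 1 \<le> j \<and> j + 2 \<le> N then complex_of_real (1-\<rho>) * b (j-1+1) else 0)
      + (if j + 1 = N then b (N-2+1) else 0)"
      by (rule Q_sum[OF j N])
    finally have L: "(?B *\<^sub>v ?c) $ i = \<phi> * (b (j+1) - ((if j + 2 \<le> N then complex_of_real \<rho> * b (j+1+1) else 0)
      + (if 1 \<le> j \<and> j + 2 \<le> N then complex_of_real (1-\<rho>) * b (j-1+1) else 0)
      + (if j + 1 = N then b (N-2+1) else 0))) - \<nu>\<^sup>2 * b (j+1)" .
    consider (z) "j = 0" | (mid) "1 \<le> j" "j + 2 \<le> N" | (last) "j + 1 = N" using j by linarith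
    then show ?thesis
    proof cases
      case z
      have "j + 2 \<le> N" "j + 1 \<noteq> N" using z N by auto
      then show ?thesis unfolding L R using z i1 R0 by (simp add: numeral_2_eq_2)
    next
      case mid
      have "j + 1 \<noteq> N" "i \<noteq> 1" using mid i1 by auto
      then show ?thesis unfolding L R using mid Rmid[OF mid] by (simp add: algebra_simps)
    next
      case last
      have "\<not> j + 2 \<le> N" "i \<noteq> 1" "N - 2 + 1 = N - 1" "j + 1 = N" using last i1 N by auto
      then show ?thesis unfolding L R using Rlast by (simp add: algebra_simps)
    qed
  qed
qed

lemma mult_mat_vec_uminus_right: "dim_vec w = dim_col A \<Longrightarrow> A *\<^sub>v (- w) = - (A *\<^sub>v (w :: 'a :: comm_ring_1 vec))"
  by (intro eq_vecI) (auto simp: scalar_prod_def sum_negf)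

lemma solve_via_inverse:
  fixes B :: "complex mat"
  assumes B: "B \<in> carrier_mat n n" and d: "det B \<noteq> 0" and c: "c \<in> carrier_vec n"
    and eq: "B *\<^sub>v c = - g" and g: "g \<in> carrier_vec n"
  shows "- (the (mat_inverse B) *\<^sub>v g) = c"
proof -
  have U: "B \<in> Units (ring_mat TYPE(complex) n n)" by (rule det_non_zero_imp_unit[OF B d])
  obtain Bi where Bi: "mat_inverse B = Some Bi"
    using mat_inverse(1)[OF B, of n] U by (cases "mat_inverse B") auto
  from mat_inverse(2)[OF B Bi] have BiB: "Bi * B = 1\<^sub>m n" and Bic: "Bi \<in> carrier_mat n n" by auto
  have "g = - (B *\<^sub>v c)" using eq by simp
  then have "- (Bi *\<^sub>v g) = Bi *\<^sub>v (B *\<^sub>v c)"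
    using B c Bic by (simp add: mult_mat_vec_uminus_right)
  also have "\<dots> = (Bi * B) *\<^sub>v c" using B c Bic by simp
  also have "\<dots> = c" using BiB c by simp
  finally show ?thesis using Bi by simp
qed

theorem mainTheorem4:
  fixes N k :: nat and \<rho> f g \<omega> :: real and \<nu> :: complex
  assumes "N \<ge> 2"
    and "0 < \<rho>" and "\<rho> < 1" and "\<rho> \<noteq> 1/2"
    and "f < 0" and "g < 0"
    and "\<omega> \<noteq> 0" and "\<nu> = \<i> * complex_of_real \<omega>"
    and "\<not> eigenvalue (M_mat N \<rho> f g) \<nu>"
    and "1 \<le> k" and "k \<le> N"
    and "(mu_plus \<rho> f g \<nu> - inverse (mu_plus \<rho> f g \<nu>)) * mu_plus \<rho> f g \<nu> ^ N
         - (mu_minus \<rho> f g \<nu> - inverse (mu_minus \<rho> f g \<nu>)) * mu_minus \<rho> f g \<nu> ^ N \<noteq> 0"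
  shows "a_k N \<rho> f g \<nu> k =
    complex_of_real (kappa \<rho> ^ k) *
      (((mu_plus \<rho> f g \<nu> - inverse (mu_plus \<rho> f g \<nu>)) * mu_plus \<rho> f g \<nu> ^ (N - k)
        - (mu_minus \<rho> f g \<nu> - inverse (mu_minus \<rho> f g \<nu>)) * mu_minus \<rho> f g \<nu> ^ (N - k))
     / ((mu_plus \<rho> f g \<nu> - inverse (mu_plus \<rho> f g \<nu>)) * mu_plus \<rho> f g \<nu> ^ N
        - (mu_minus \<rho> f g \<nu> - inverse (mu_minus \<rho> f g \<nu>)) * mu_minus \<rho> f g \<nu> ^ N))"
proof -
  note N = assms(1)
  define r where "r = complex_of_real \<rho>"
  define \<phi> where "\<phi> = complex_of_real f + complex_of_real g * \<nu>"
  define \<gamma> where "\<gamma> = gamma_fn f g \<nu>"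
  define s where "s = sqrt_br (\<gamma>\<^sup>2 - 4 * complex_of_real (\<rho> * (1 - \<rho>)))"
  define p where "p = mu_plus \<rho> f g \<nu>"
  define q where "q = mu_minus \<rho> f g \<nu>"
  define X where "X = p - inverse p"
  define Y where "Y = q - inverse q"
  define D where "D = X * p ^ N - Y * q ^ N"
  have D0: "D \<noteq> 0" using assms(12) unfolding D_def X_def Y_def p_def q_def .
  have r0: "r \<noteq> 0" using assms(2) unfolding r_def by simp
  have \<phi>0: "\<phi> \<noteq> 0"
  proof
    assume "\<phi> = 0"
    then have "Re \<phi> = 0" by simp
    then show False using assms(5,8) unfolding \<phi>_def by simp
  qed
  have ss: "s\<^sup>2 = \<gamma>\<^sup>2 - 4 * r * (1 - r)" unfolding s_def r_def by (simp add: sqrt_br_sq)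
  have pd: "p = (\<gamma> + s) / (2 * r)" unfolding p_def mu_plus_def s_def \<gamma>_def r_def ..
  have qd: "q = (\<gamma> - s) / (2 * r)" unfolding q_def mu_minus_def s_def \<gamma>_def r_def ..
  have pq: "p * q = (1 - r) / r"
  proof -
    have h: "(\<gamma> + s) * (\<gamma> - s) = 4 * r * (1 - r)" using ss by (simp add: algebra_simps power2_eq_square)
    have "p * q = (\<gamma> + s) * (\<gamma> - s) / (4 * r * r)" unfolding pd qd by (simp add: field_simps)
    also have "\<dots> = (1 - r) / r" unfolding h using r0 by (simp add: field_simps)
    finally show ?thesis .
  qed
  have ppq: "p + q = \<gamma> / r" unfolding pd qd using r0 by (simp add: field_simps)
  have kap: "complex_of_real (kappa \<rho>) = p * q" unfolding pq kappa_def r_def by simp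
  have rpq: "r * (p * q + 1) = 1" unfolding pq using r0 by (simp add: field_simps)
  have p0: "p \<noteq> 0" and q0: "q \<noteq> 0" using rpq pq r0 assms(3) unfolding r_def by auto
  have quad_p: "r * p\<^sup>2 - \<gamma> * p + (1 - r) = 0"
  proof -
    have "\<gamma> = r * (p + q)" using ppq r0 by (simp add: field_simps)
    moreover have "1 - r = r * (p * q)" using pq r0 by (simp add: field_simps)
    ultimately show ?thesis by (simp add: algebra_simps power2_eq_square)
  qed
  have quad_q: "r * q\<^sup>2 - \<gamma> * q + (1 - r) = 0"
  proof -
    have "\<gamma> = r * (p + q)" using ppq r0 by (simp add: field_simps)
    moreover have "1 - r = r * (p * q)" using pq r0 by (simp add: field_simps)
    ultimately show ?thesis by (simp add: algebra_simps power2_eq_square)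
  qed
  have \<gamma>\<phi>: "\<phi> * \<gamma> = \<phi> - \<nu>\<^sup>2" unfolding \<gamma>_def gamma_fn_def \<phi>_def[symmetric] using \<phi>0 by simp
  have \<nu>2: "\<nu>\<^sup>2 = \<phi> - \<phi> * \<gamma>" using \<gamma>\<phi> by simp
  define b where "b k = (X * p ^ N * q ^ k - Y * q ^ N * p ^ k) / D" for k
  have rec: "r * b (k+2) - \<gamma> * b (k+1) + (1 - r) * b k = 0" for k
  proof -
    have "D * (r * b (k+2) - \<gamma> * b (k+1) + (1 - r) * b k)
       = X * p ^ N * q ^ k * (r * q\<^sup>2 - \<gamma> * q + (1 - r)) - Y * q ^ N * p ^ k * (r * p\<^sup>2 - \<gamma> * p + (1 - r))"
      unfolding b_def using D0 by (simp add: field_simps power2_eq_square)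
    then show ?thesis using D0 quad_p quad_q by simp
  qed
  have b0: "b 0 = 1" unfolding b_def D_def using D0[unfolded D_def] by simp
  have R0: "\<phi> * (b 1 - complex_of_real \<rho> * b 2) - \<nu>\<^sup>2 * b 1 = complex_of_real (1-\<rho>) * \<phi>"
  proof -
    have h: "\<gamma> * b 1 - r * b 2 = 1 - r"
      using rec[of 0] b0 by (simp add: algebra_simps numeral_2_eq_2)
    have "\<phi> * (b 1 - r * b 2) - \<nu>\<^sup>2 * b 1 = \<phi> * (\<gamma> * b 1 - r * b 2)"
      by (simp add: \<nu>2 algebra_simps)
    also have "\<dots> = \<phi> * (1 - r)" by (simp only: h)
    finally show ?thesis unfolding r_def by (simp add: algebra_simps)
  qed
  have Rmid: "\<phi> * (b (j+1) - complex_of_real \<rho> * b (j+2) - complex_of_real (1-\<rho>) * b j) - \<nu>\<^sup>2 * b (j+1) = 0" for j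
  proof -
    have "\<phi> * (b (j+1) - r * b (j+2) - (1 - r) * b j) - \<nu>\<^sup>2 * b (j+1)
        = - \<phi> * (r * b (j+2) - \<gamma> * b (j+1) + (1 - r) * b j)"
      by (simp add: \<nu>2 algebra_simps)
    then show ?thesis using rec[of j] unfolding r_def by simp
  qed
  have Rlast: "\<phi> * (b N - b (N-1)) - \<nu>\<^sup>2 * b N = 0"
  proof -
    obtain n where n: "N = Suc n" using N by (cases N) auto
    have bN: "b N = (p*q)^N * (X - Y) / D" unfolding b_def power_mult_distrib
      by (simp add: algebra_simps)
    have bN1: "b (N-1) = (p*q)^n * (X * p - Y * q) / D" unfolding b_def n power_mult_distrib power_Suc
      by (simp add: algebra_simps)
    have g: "\<gamma> = r * (p + q)" using ppq r0 by (simp add: field_simps)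
    have h1: "p * q * (X - Y) = (p - q) * (p * q + 1)"
      unfolding X_def Y_def using p0 q0 by (simp add: field_simps)
    have h2: "X * p - Y * q = (p + q) * (p - q)"
      unfolding X_def Y_def using p0 q0 by (simp add: algebra_simps power2_eq_square)
    have key: "\<gamma> * (p * q * (X - Y)) = X * p - Y * q"
    proof -
      have "\<gamma> * (p * q * (X - Y)) = (p + q) * (p - q) * (r * (p * q + 1))"
        unfolding g h1 by (simp only: mult_ac)
      also have "\<dots> = X * p - Y * q" unfolding rpq h2 by simp
      finally show ?thesis .
    qed
    have "\<gamma> * b N = \<gamma> * ((p*q)^N * (X - Y) / D)" by (simp only: bN)
    also have "\<dots> = (p*q)^n * (\<gamma> * (p * q * (X - Y))) / D" unfolding n power_Suc
      by (simp only: mult_ac times_divide_eq_right)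
    also have "\<dots> = b (N-1)" unfolding key bN1 ..
    finally have e: "\<gamma> * b N = b (N-1)" .
    have "\<phi> * (b N - b (N-1)) - \<nu>\<^sup>2 * b N = \<phi> * (\<gamma> * b N - b (N-1))"
      by (simp add: \<nu>2 algebra_simps)
    then show ?thesis unfolding e by simp
  qed
  define c where "c = vec (2*N) (\<lambda>i. if even i then b (i div 2 + 1) else \<nu> * b (i div 2 + 1))"
  have Bc: "(M_mat N \<rho> f g - \<nu> \<cdot>\<^sub>m 1\<^sub>m (2*N)) *\<^sub>v c = - g0_vec N \<rho> f g \<nu>"
    unfolding c_def by (rule key_matrix[OF N R0[unfolded \<phi>_def] _ Rlast[unfolded \<phi>_def]]) (rule Rmid[unfolded \<phi>_def])
  have Mc: "M_mat N \<rho> f g \<in> carrier_mat (2*N) (2*N)" by (rule carrier_matI) (simp_all add: dims)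
  have Bcar: "M_mat N \<rho> f g - \<nu> \<cdot>\<^sub>m 1\<^sub>m (2*N) \<in> carrier_mat (2*N) (2*N)" by (rule carrier_matI) (simp_all add: dims)
  have cm: "char_matrix (M_mat N \<rho> f g) \<nu> = M_mat N \<rho> f g - \<nu> \<cdot>\<^sub>m 1\<^sub>m (2*N)"
    unfolding char_matrix_def dims by (intro eq_matI) (simp_all add: dims)
  have det0: "det (M_mat N \<rho> f g - \<nu> \<cdot>\<^sub>m 1\<^sub>m (2*N)) \<noteq> 0"
  proof -
    have "det (char_matrix (M_mat N \<rho> f g) \<nu>) \<noteq> 0" using assms(9) eigenvalue_det[OF Mc, of \<nu>] by blast
    then show ?thesis unfolding cm .
  qed
  have av: "a_vec N \<rho> f g \<nu> = c" unfolding a_vec_def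
  proof (rule solve_via_inverse[OF Bcar det0 _ Bc])
    show "c \<in> carrier_vec (2*N)" unfolding c_def by (rule vec_carrier)
    show "g0_vec N \<rho> f g \<nu> \<in> carrier_vec (2*N)" unfolding g0_vec_def by (rule smult_carrier_vec[THEN iffD2]) (rule unit_vec_carrier)
  qed
  have "a_k N \<rho> f g \<nu> k = b k"
  proof -
    have "2*k - 2 < 2*N" "even (2*k-2)" "(2*k-2) div 2 + 1 = k" using assms(10,11) by auto
    then show ?thesis unfolding a_k_def av c_def by simp
  qed
  also have "b k = complex_of_real (kappa \<rho> ^ k) * ((X * p ^ (N-k) - Y * q ^ (N-k)) / D)"
  proof -
    have e: "p ^ N = p ^ k * p ^ (N-k)" "q ^ N = q ^ k * q ^ (N-k)" using assms(11)
      by (simp_all add: power_add[symmetric])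
    have aux: "(X * (P * P') * Q - Y * (Q * Q') * P) / D = (P * Q) * ((X * P' - Y * Q') / D)" for P P' Q Q' :: complex
      by (simp add: divide_inverse algebra_simps)
    show ?thesis unfolding b_def of_real_power kap e power_mult_distrib by (rule aux)
  qed
  finally show ?thesis unfolding D_def X_def Y_def p_def q_def .
qed
end
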